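(* Let $r=r(n)\ge 2$ with $r=o(n^{3/8})$. Then $\Pr(\mathcal B_{3r}\mid\mathcal A_4)=1-o(1)$ as $n\to\infty$.
   Context: Random intersecting process: Let $[n]=\{1,\dots,n\}$ and $\binom{[n]}{r}$ the family of $r$-subsets of $[n]$. Choose $e_1$ uniformly at random from $\binom{[n]}{r}$. Given $\mathcal F_i=\{e_1,\dots,e_i\}$, let $\mathcal A(\mathcal F_i)=\{e\in\binom{[n]}{r}: e\notin\mathcal F_i,\ e\cap e_j\neq\emptyset \text{ for all } 1\le j\le i\}$, and choose $e_{i+1}$ uniformly at random from $\mathcal A(\mathcal F_i)$. The process halts when $\mathcal A(\mathcal F_i)=\emptyset$. A star is a collection of sets such that every pair of them has the same one-element intersection $\{x\}$ ($x$ is the kernel); a single set is a $1$-star by convention. For $i\ge1$, $\mathcal A_i$ is the event that at least $i$ edges are chosen and $\mathcal F_i$ is an $i$-star. For $i\ge3$, $\mathcal B_i$ is the event that at least $i$ edges are chosen and $\bigcap_{j=1}^i e_j\neq\emptyset$. *)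

theory Defs
  imports "HOL-Probability.Probability" "HOL-Library.Landau_Symbols"
begin

definition admissible :: "nat \<Rightarrow> nat \<Rightarrow> nat set list \<Rightarrow> nat set set" where
  "admissible n r F = {e. e \<subseteq> {1..n} \<and> card e = r \<and> e \<notin> set F \<and> (\<forall>f\<in>set F. e \<inter> f \<noteq> {})}"

definition proc_step :: "nat \<Rightarrow> nat \<Rightarrow> nat set list \<Rightarrow> nat set list pmf" where
  "proc_step n r F = (if admissible n r F = {} then return_pmf F
      else map_pmf (\<lambda>e. F @ [e]) (pmf_of_set (admissible n r F)))"

text \<open>Distribution of the final (halted) sequence (e_1,...,e_m) of the random
intersecting process. Since edges are distinct, at most (n choose r) steps occur,
so (n choose r)+1 iterations reach the halted state.\<close>
definition rip :: "nat \<Rightarrow> nat \<Rightarrow> nat set list pmf" where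
  "rip n r = ((\<lambda>p. bind_pmf p (proc_step n r)) ^^ Suc (n choose r)) (return_pmf [])"

text \<open>A list of sets is a star: all pairwise intersections equal the same singleton.
(A single set is vacuously a star.)\<close>
definition is_star :: "nat set list \<Rightarrow> bool" where
  "is_star F = (\<exists>x. \<forall>j<length F. \<forall>k<length F. j \<noteq> k \<longrightarrow> F ! j \<inter> F ! k = {x})"

definition event_A :: "nat \<Rightarrow> nat set list set" where
  "event_A i = {F. i \<le> length F \<and> is_star (take i F)}"

definition event_B :: "nat \<Rightarrow> nat set list set" where
  "event_B i = {F. i \<le> length F \<and> \<Inter> (set (take i F)) \<noteq> {}}"

definition cond_prob :: "'a pmf \<Rightarrow> 'a set \<Rightarrow> 'a set \<Rightarrow> real" where
  "cond_prob p B A = measure_pmf.prob p (B \<inter> A) / measure_pmf.prob p A"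

end

theory Submission imports Defs begin


definition IT :: "nat \<Rightarrow> nat \<Rightarrow> nat \<Rightarrow> nat set list pmf" where
  "IT n r k = ((\<lambda>p. bind_pmf p (proc_step n r)) ^^ k) (return_pmf [])"

lemma IT_0: "IT n r 0 = return_pmf []" by (simp add: IT_def)
lemma IT_Suc: "IT n r (Suc k) = bind_pmf (IT n r k) (proc_step n r)" by (simp add: IT_def)
lemma rip_IT: "rip n r = IT n r (Suc (n choose r))" by (simp add: IT_def rip_def)

lemma finite_adm: "finite (admissible n r F)"
  by (rule finite_subset[of _ "Pow {1..n}"]) (auto simp: admissible_def)

lemma set_proc_step: "G \<in> set_pmf (proc_step n r F) \<Longrightarrow>
   (admissible n r F = {} \<and> G = F) \<or> (admissible n r F \<noteq> {} \<and> (\<exists>e\<in>admissible n r F. G = F @ [e]))"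
  using finite_adm[of n r F] by (auto simp: proc_step_def split: if_splits)

lemma IT_support: "F \<in> set_pmf (IT n r k) \<Longrightarrow> length F \<le> k \<and> (length F < k \<longrightarrow> admissible n r F = {})
   \<and> (\<forall>f\<in>set F. f \<subseteq> {1..n} \<and> card f = r)"
proof (induction k arbitrary: F)
  case 0 then show ?case by (simp add: IT_0)
next
  case (Suc k)
  then obtain G where G: "G \<in> set_pmf (IT n r k)" "F \<in> set_pmf (proc_step n r G)"
    by (auto simp: IT_Suc)
  note IH = Suc.IH[OF G(1)]
  from set_proc_step[OF G(2)] show ?case
  proof
    assume "admissible n r G = {} \<and> F = G" with IH show ?thesis by auto
  next
    assume "admissible n r G \<noteq> {} \<and> (\<exists>e\<in>admissible n r G. F = G @ [e])"
    then obtain e where "admissible n r G \<noteq> {}" "e \<in> admissible n r G" "F = G @ [e]" by blast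
    with IH show ?thesis by (auto simp: admissible_def)
  qed
qed

lemma IT_extend: "F \<in> set_pmf (IT n r k) \<Longrightarrow> e \<in> admissible n r F \<Longrightarrow> F @ [e] \<in> set_pmf (IT n r (Suc k))"
proof -
  assume a: "F \<in> set_pmf (IT n r k)" "e \<in> admissible n r F"
  have "F @ [e] \<in> set_pmf (proc_step n r F)"
    using a(2) finite_adm[of n r F] by (auto simp: proc_step_def)
  with a(1) show ?thesis by (auto simp: IT_Suc)
qed

lemma IT_take: "k \<le> m \<Longrightarrow> map_pmf (take k) (IT n r m) = IT n r k"
proof (induction m rule: dec_induct)
  case base
  have "map_pmf (take k) (IT n r k) = map_pmf (\<lambda>x. x) (IT n r k)"
    by (rule map_pmf_cong) (auto dest: IT_support)
  then show ?case by simp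
next
  case (step m)
  have "map_pmf (take k) (IT n r (Suc m)) = bind_pmf (IT n r m) (\<lambda>F. map_pmf (take k) (proc_step n r F))"
    by (simp add: IT_Suc map_bind_pmf)
  also have "\<dots> = bind_pmf (IT n r m) (\<lambda>F. return_pmf (take k F))"
  proof (rule bind_pmf_cong)
    fix F assume F: "F \<in> set_pmf (IT n r m)"
    show "map_pmf (take k) (proc_step n r F) = return_pmf (take k F)"
    proof (cases "admissible n r F = {}")
      case True then show ?thesis by (simp add: proc_step_def)
    next
      case False
      with IT_support[OF F] have "length F = m" by auto
      with step.hyps have "\<And>e. take k (F @ [e]) = take k F" by simp
      with False show ?thesis by (simp add: proc_step_def map_pmf_comp)
    qed
  qed simp
  also have "\<dots> = map_pmf (take k) (IT n r m)" by (simp add: map_pmf_def)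
  finally show ?case using step.IH by simp
qed

lemma prob_IT_take:
  assumes "k \<le> m" "\<And>F. (take k F \<in> E) = (F \<in> E)"
  shows "measure_pmf.prob (IT n r m) E = measure_pmf.prob (IT n r k) E"
proof -
  have "measure_pmf.prob (IT n r k) E = measure_pmf.prob (map_pmf (take k) (IT n r m)) E"
    using IT_take[OF assms(1)] by simp
  also have "\<dots> = measure_pmf.prob (IT n r m) E"
    using assms(2) by (simp add: vimage_def)
  finally show ?thesis by simp
qed

lemma event_A_take: "4 \<le> k \<Longrightarrow> (take k F \<in> event_A 4) = (F \<in> event_A 4)"
  by (auto simp: event_A_def min_def)

lemma event_B_take: "j \<le> k \<Longrightarrow> (take k F \<in> event_B j) = (F \<in> event_B j)"
  by (auto simp: event_B_def min_def)


lemma card_containing: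
  assumes "x \<in> {1..n}" "1 \<le> r"
  shows "card {e. e \<subseteq> {1..n} \<and> card e = r \<and> x \<in> e} = (n - 1) choose (r - 1)"
proof -
  have eq: "{e. e \<subseteq> {1..n} \<and> card e = r \<and> x \<in> e} = insert x ` {R. R \<subseteq> {1..n} - {x} \<and> card R = r - 1}"
  proof (rule set_eqI, rule iffI)
    fix e assume e: "e \<in> {e. e \<subseteq> {1..n} \<and> card e = r \<and> x \<in> e}"
    then have "finite e" using finite_subset by blast
    with e have "e = insert x (e - {x})" "card (e - {x}) = r - 1" by auto
    with e show "e \<in> insert x ` {R. R \<subseteq> {1..n} - {x} \<and> card R = r - 1}" by blast
  next
    fix e assume "e \<in> insert x ` {R. R \<subseteq> {1..n} - {x} \<and> card R = r - 1}"
    then obtain R where R: "R \<subseteq> {1..n} - {x}" "card R = r - 1" "e = insert x R" by blast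
    then have "finite R" using finite_subset by blast
    have "x \<notin> R" using R by auto
    with R \<open>finite R\<close> assms have "card e = r" by simp
    with R assms show "e \<in> {e. e \<subseteq> {1..n} \<and> card e = r \<and> x \<in> e}" by auto
  qed
  have inj: "inj_on (insert x) {R. R \<subseteq> {1..n} - {x} \<and> card R = r - 1}"
    by (rule inj_onI) (metis Diff_insert_absorb Diff_iff insertI1 mem_Collect_eq subset_iff)
  have "card {R. R \<subseteq> {1..n} - {x} \<and> card R = r - 1} = card ({1..n} - {x}) choose (r - 1)"
    by (rule n_subsets) simp
  also have "card ({1..n} - {x}) = n - 1" using assms by simp
  finally show ?thesis unfolding eq card_image[OF inj] .
qed

definition beta :: "nat \<Rightarrow> nat \<Rightarrow> nat" where
  "beta n r = (if 4 \<le> r then (r - 1)^4 * (n choose (r - 4)) else 0)"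

lemma bad_count:
  fixes s :: "nat \<Rightarrow> nat set"
  assumes s_sub: "\<And>j. j < 4 \<Longrightarrow> s j \<subseteq> {1..n}"
    and s_card: "\<And>j. j < 4 \<Longrightarrow> card (s j) \<le> r - 1"
    and s_disj: "\<And>j l. j < 4 \<Longrightarrow> l < 4 \<Longrightarrow> j \<noteq> l \<Longrightarrow> s j \<inter> s l = {}"
  shows "card {e. e \<subseteq> {1..n} \<and> card e = r \<and> (\<forall>j<4. e \<inter> s j \<noteq> {})} \<le> beta n r"
proof -
  define Bad where "Bad = {e. e \<subseteq> {1..n} \<and> card e = r \<and> (\<forall>j<4. e \<inter> s j \<noteq> {})}"
  define P where "P = s 0 \<times> s 1 \<times> s 2 \<times> s 3 \<times> {R. R \<subseteq> {1..n} \<and> card R = r - 4}"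
  define g where "g = (\<lambda>(a::nat,b::nat,c::nat,d::nat,R). {a,b,c,d} \<union> R)"
  have fin: "\<And>j. j < 4 \<Longrightarrow> finite (s j)" using s_sub finite_subset by blast
  have key: "\<And>e. e \<in> Bad \<Longrightarrow> e \<in> g ` P \<and> 4 \<le> r"
  proof -
    fix e assume e: "e \<in> Bad"
    then have fe: "finite e" unfolding Bad_def using finite_subset by blast
    have "e \<inter> s 0 \<noteq> {}" using e unfolding Bad_def by simp
    then obtain a where a: "a \<in> e" "a \<in> s 0" by blast
    have "e \<inter> s 1 \<noteq> {}" using e unfolding Bad_def by simp
    then obtain b where b: "b \<in> e" "b \<in> s 1" by blast
    have "e \<inter> s 2 \<noteq> {}" using e unfolding Bad_def by simp
    then obtain c where c: "c \<in> e" "c \<in> s 2" by blast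
    have "e \<inter> s 3 \<noteq> {}" using e unfolding Bad_def by simp
    then obtain d where d: "d \<in> e" "d \<in> s 3" by blast
    have dis: "a \<noteq> b" "a \<noteq> c" "a \<noteq> d" "b \<noteq> c" "b \<noteq> d" "c \<noteq> d"
      using a b c d s_disj[of 0 1] s_disj[of 0 2] s_disj[of 0 3] s_disj[of 1 2] s_disj[of 1 3] s_disj[of 2 3]
      by auto
    have c4: "card {a,b,c,d} = 4" using dis by simp
    have sub: "{a,b,c,d} \<subseteq> e" using a b c d by auto
    have "card {a,b,c,d} \<le> card e" using card_mono[OF fe sub] .
    with c4 e have r4: "4 \<le> r" unfolding Bad_def by simp
    define R where "R = e - {a,b,c,d}"
    have "card R = r - 4" unfolding R_def using card_Diff_subset[OF _ sub] c4 e unfolding Bad_def by simp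
    moreover have "R \<subseteq> {1..n}" using e unfolding R_def Bad_def by auto
    ultimately have "(a,b,c,d,R) \<in> P" using a b c d unfolding P_def by simp
    moreover have "e = g (a,b,c,d,R)" unfolding g_def R_def using sub by auto
    ultimately show "e \<in> g ` P \<and> 4 \<le> r" using r4 by blast
  qed
  show ?thesis
  proof (cases "4 \<le> r")
    case False
    then have "Bad = {}" using key by blast
    then have "card Bad = 0" by simp
    then show ?thesis unfolding Bad_def by linarith
  next
    case True
    have "card Bad \<le> card (g ` P)" using key by (intro card_mono) (auto intro: finite_imageI simp: P_def fin)
    also have "\<dots> \<le> card P" by (rule card_image_le) (simp add: P_def fin)
    also have "card P = card (s 0) * card (s 1) * card (s 2) * card (s 3) * (n choose (r - 4))"
      unfolding P_def by (simp add: card_cartesian_product n_subsets)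
    also have "\<dots> \<le> (r-1) * (r-1) * (r-1) * (r-1) * (n choose (r - 4))"
      using s_card[of 0] s_card[of 1] s_card[of 2] s_card[of 3] by (intro mult_mono) auto
    finally show ?thesis using True unfolding Bad_def beta_def by (simp add: power4_eq_xxxx)
  qed
qed


lemma kernel:
  assumes "F \<in> event_A 4" "F \<in> event_B k" "length F = k" "4 \<le> k"
  obtains x where "\<forall>f\<in>set F. x \<in> f" "\<forall>j<4. \<forall>l<4. j \<noteq> l \<longrightarrow> F!j \<inter> F!l = {x}"
proof -
  from assms(1) obtain x where x: "\<forall>j<length (take 4 F). \<forall>l<length (take 4 F). j \<noteq> l \<longrightarrow> take 4 F ! j \<inter> take 4 F ! l = {x}"
    unfolding event_A_def is_star_def by blast
  have lt: "length (take 4 F) = 4" using assms(3,4) by simp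
  have x': "\<forall>j<4. \<forall>l<4. j \<noteq> l \<longrightarrow> F ! j \<inter> F ! l = {x}"
  proof (intro allI impI)
    fix j l :: nat assume "j < 4" "l < 4" "j \<noteq> l"
    with x lt have "take 4 F ! j \<inter> take 4 F ! l = {x}" by simp
    with \<open>j < 4\<close> \<open>l < 4\<close> show "F ! j \<inter> F ! l = {x}" by simp
  qed
  from assms(2,3) obtain y where y: "y \<in> \<Inter>(set F)" unfolding event_B_def by auto
  have "F!0 \<in> set F" "F!1 \<in> set F" using assms(3,4) by auto
  with y have "y \<in> F!0 \<inter> F!1" by auto
  with x'[rule_format, of 0 1] have "y = x" by auto
  with y have "\<forall>f\<in>set F. x \<in> f" by auto
  with x' that show ?thesis by blast
qed

lemma step_bound:
  assumes F: "F \<in> set_pmf (IT n r k)" and k4: "4 \<le> k" and FAB: "F \<in> event_A 4 \<inter> event_B k"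
    and kD: "k < (n - 1) choose (r - 1)" and r1: "1 \<le> r"
  shows "measure_pmf.prob (proc_step n r F) (- event_B (Suc k))
          \<le> real (beta n r) / real (((n - 1) choose (r - 1)) - k)"
proof -
  define D where "D = (n - 1) choose (r - 1)"
  have supp: "length F \<le> k" "\<forall>f\<in>set F. f \<subseteq> {1..n} \<and> card f = r" using IT_support[OF F] by auto
  with FAB have lenF: "length F = k" unfolding event_B_def by auto
  obtain x where x: "\<forall>f\<in>set F. x \<in> f" "\<forall>j<4. \<forall>l<4. j \<noteq> l \<longrightarrow> F!j \<inter> F!l = {x}"
    using kernel[of F k] FAB lenF k4 by blast
  have F0: "F!0 \<in> set F" using lenF k4 by auto
  with x supp have xn: "x \<in> {1..n}" by blast
  define Good where "Good = {e. e \<subseteq> {1..n} \<and> card e = r \<and> x \<in> e} - set F"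
  have Good_adm: "Good \<subseteq> admissible n r F" unfolding Good_def admissible_def using x(1) by auto
  have "D - k \<le> card Good"
  proof -
    have "card (set F) \<le> k" using card_length[of F] lenF by simp
    moreover have "card {e. e \<subseteq> {1..n} \<and> card e = r \<and> x \<in> e} = D"
      unfolding D_def by (rule card_containing[OF xn r1])
    moreover have "card {e. e \<subseteq> {1..n} \<and> card e = r \<and> x \<in> e} - card (set F) \<le> card Good"
      unfolding Good_def by (rule diff_card_le_card_Diff) simp
    ultimately show ?thesis by linarith
  qed
  also have "card Good \<le> card (admissible n r F)" by (rule card_mono[OF finite_adm Good_adm])
  finally have cadm: "D - k \<le> card (admissible n r F)" .
  with kD have ne: "admissible n r F \<noteq> {}" unfolding D_def by auto
  define Bad where "Bad = {e. e \<subseteq> {1..n} \<and> card e = r \<and> (\<forall>j<4. e \<inter> (F!j - {x}) \<noteq> {})}"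
  have sub: "admissible n r F \<inter> ((\<lambda>e. F @ [e]) -` (- event_B (Suc k))) \<subseteq> Bad"
  proof
    fix e assume e: "e \<in> admissible n r F \<inter> ((\<lambda>e. F @ [e]) -` (- event_B (Suc k)))"
    have "x \<notin> e"
    proof
      assume "x \<in> e"
      then have "x \<in> \<Inter>(set (take (Suc k) (F @ [e])))" using x(1) lenF by auto
      then have "F @ [e] \<in> event_B (Suc k)" unfolding event_B_def using lenF by auto
      with e show False by auto
    qed
    moreover have "\<forall>j<4. e \<inter> F!j \<noteq> {}" using e lenF k4 unfolding admissible_def by auto
    ultimately show "e \<in> Bad" using e unfolding Bad_def admissible_def by auto
  qed
  have cBad: "card Bad \<le> beta n r"
    unfolding Bad_def
  proof (rule bad_count)
    fix j :: nat assume j: "j < 4"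
    then have Fj: "F!j \<in> set F" using lenF k4 by auto
    then show "F!j - {x} \<subseteq> {1..n}" using supp by auto
    show "card (F!j - {x}) \<le> r - 1" using Fj supp x(1) by auto
  next
    fix j l :: nat assume "j < 4" "l < 4" "j \<noteq> l"
    then show "(F!j - {x}) \<inter> (F!l - {x}) = {}" using x(2) by auto
  qed
  have finBad: "finite Bad" unfolding Bad_def by (rule finite_subset[of _ "Pow {1..n}"]) auto
  have "measure_pmf.prob (proc_step n r F) (- event_B (Suc k))
        = measure_pmf.prob (pmf_of_set (admissible n r F)) ((\<lambda>e. F @ [e]) -` (- event_B (Suc k)))"
    using ne by (simp add: proc_step_def)
  also have "\<dots> = card (admissible n r F \<inter> ((\<lambda>e. F @ [e]) -` (- event_B (Suc k)))) / card (admissible n r F)"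
    by (rule measure_pmf_of_set[OF ne finite_adm])
  also have "\<dots> \<le> card Bad / card (admissible n r F)"
    by (intro divide_right_mono of_nat_mono card_mono[OF finBad sub]) auto
  also have "\<dots> \<le> beta n r / card (admissible n r F)"
    by (intro divide_right_mono) (use cBad in auto)
  also have "\<dots> \<le> beta n r / (D - k)"
    using cadm kD unfolding D_def by (intro divide_left_mono) auto
  finally show ?thesis unfolding D_def .
qed


lemma A4_sub_B4: "event_A 4 \<subseteq> event_B 4"
proof
  fix F assume F: "F \<in> event_A 4"
  then have len: "4 \<le> length F" unfolding event_A_def by simp
  from F obtain x where x: "\<forall>j<length (take 4 F). \<forall>l<length (take 4 F). j \<noteq> l \<longrightarrow> take 4 F ! j \<inter> take 4 F ! l = {x}"
    unfolding event_A_def is_star_def by blast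
  have lt: "length (take 4 F) = 4" using len by simp
  have "x \<in> \<Inter>(set (take 4 F))"
  proof
    fix f assume "f \<in> set (take 4 F)"
    then obtain j where j: "j < 4" "f = take 4 F ! j" using lt by (auto simp: in_set_conv_nth)
    define l where "l = (if j = 0 then 1 else (0::nat))"
    have "l < 4" "j \<noteq> l" unfolding l_def by auto
    with x lt j have "take 4 F ! j \<inter> take 4 F ! l = {x}" by simp
    with j show "x \<in> f" by auto
  qed
  with len show "F \<in> event_B 4" unfolding event_B_def by auto
qed

lemma event_B_mono: "j \<le> k \<Longrightarrow> event_B k \<subseteq> event_B j"
proof
  fix F assume jk: "j \<le> k" and F: "F \<in> event_B k"
  then obtain y where y: "y \<in> \<Inter>(set (take k F))" unfolding event_B_def by auto
  have "set (take j F) \<subseteq> set (take k F)" using jk by (metis set_take_subset_set_take)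
  with y have "y \<in> \<Inter>(set (take j F))" by auto
  with F jk show "F \<in> event_B j" unfolding event_B_def by auto
qed

lemma one_step:
  assumes k4: "4 \<le> k" and kD: "k < (n - 1) choose (r - 1)" and r1: "1 \<le> r"
  shows "measure_pmf.prob (IT n r (Suc k)) (event_A 4 \<inter> event_B k - event_B (Suc k))
    \<le> real (beta n r) / real (((n - 1) choose (r - 1)) - k) * measure_pmf.prob (IT n r k) (event_A 4 \<inter> event_B k)"
proof -
  define S where "S = event_A 4 \<inter> event_B k"
  define E where "E = S - event_B (Suc k)"
  define \<delta> where "\<delta> = real (beta n r) / real (((n - 1) choose (r - 1)) - k)"
  have \<delta>0: "\<delta> \<ge> 0" unfolding \<delta>_def by simp
  have pw: "emeasure (measure_pmf (proc_step n r F)) E \<le> ennreal \<delta> * indicator S F"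
    if F: "F \<in> set_pmf (IT n r k)" for F
  proof (cases "F \<in> S")
    case True
    have "emeasure (measure_pmf (proc_step n r F)) E \<le> emeasure (measure_pmf (proc_step n r F)) (- event_B (Suc k))"
      unfolding E_def by (intro emeasure_mono) auto
    also have "\<dots> = ennreal (measure_pmf.prob (proc_step n r F) (- event_B (Suc k)))"
      by (simp add: measure_pmf.emeasure_eq_measure)
    also have "\<dots> \<le> ennreal \<delta>"
      unfolding \<delta>_def using step_bound[OF F k4 _ kD r1] True unfolding S_def by (intro ennreal_leI) auto
    finally show ?thesis using True by simp
  next
    case False
    have "set_pmf (proc_step n r F) \<inter> E = {}"
    proof (rule ccontr)
      assume "set_pmf (proc_step n r F) \<inter> E \<noteq> {}"
      then obtain G where G: "G \<in> set_pmf (proc_step n r F)" "G \<in> S" unfolding E_def by auto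
      from set_proc_step[OF G(1)] show False
      proof
        assume "admissible n r F = {} \<and> G = F" with G False show False by simp
      next
        assume a: "admissible n r F \<noteq> {} \<and> (\<exists>e\<in>admissible n r F. G = F @ [e])"
        then obtain e where e: "G = F @ [e]" by blast
        from a IT_support[OF F] have "length F = k" by auto
        then have tk: "take k G = F" using e by simp
        have "take k G \<in> S" using G(2) event_A_take[OF k4, of G] event_B_take[of k k G] unfolding S_def by simp
        with tk False show False by simp
      qed
    qed
    then have "emeasure (measure_pmf (proc_step n r F)) E = 0"
      using measure_pmf_zero_iff[of "proc_step n r F" E] by (simp add: measure_pmf.emeasure_eq_measure)
    then show ?thesis by simp
  qed
  have "ennreal (measure_pmf.prob (IT n r (Suc k)) E) = emeasure (measure_pmf (IT n r (Suc k))) E"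
    by (simp add: measure_pmf.emeasure_eq_measure)
  also have "\<dots> = (\<integral>\<^sup>+F. emeasure (measure_pmf (proc_step n r F)) E \<partial>measure_pmf (IT n r k))"
    by (simp add: IT_Suc)
  also have "\<dots> \<le> (\<integral>\<^sup>+F. ennreal \<delta> * indicator S F \<partial>measure_pmf (IT n r k))"
    by (intro nn_integral_mono_AE) (auto intro!: AE_pmfI pw)
  also have "\<dots> = ennreal \<delta> * emeasure (measure_pmf (IT n r k)) S"
    by (simp add: nn_integral_cmult_indicator)
  also have "\<dots> = ennreal (\<delta> * measure_pmf.prob (IT n r k) S)"
    using \<delta>0 by (simp add: measure_pmf.emeasure_eq_measure ennreal_mult)
  finally have "measure_pmf.prob (IT n r (Suc k)) E \<le> \<delta> * measure_pmf.prob (IT n r k) S"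
    using \<delta>0 by (simp add: ennreal_le_iff)
  then show ?thesis unfolding E_def S_def \<delta>_def .
qed


lemma accum:
  assumes k4: "4 \<le> k" and kK: "k \<le> K" and KD: "K < (n - 1) choose (r - 1)" and r1: "1 \<le> r"
  shows "measure_pmf.prob (IT n r k) (event_A 4 - event_B k)
    \<le> real (k - 4) * (real (beta n r) / real (((n - 1) choose (r - 1)) - K)) * measure_pmf.prob (IT n r 4) (event_A 4)"
  using k4 kK
proof (induction k rule: dec_induct)
  case base
  have e: "event_A 4 - event_B 4 = {}" using A4_sub_B4 by auto
  show ?case unfolding e by simp
next
  case (step k)
  define D where "D = (n - 1) choose (r - 1)"
  define \<delta> where "\<delta> = real (beta n r) / real (D - K)"
  define P4 where "P4 = measure_pmf.prob (IT n r 4) (event_A 4)"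
  have kK: "k < K" using step by simp
  have "event_A 4 - event_B (Suc k) \<subseteq> (event_A 4 - event_B k) \<union> (event_A 4 \<inter> event_B k - event_B (Suc k))"
    by auto
  then have "measure_pmf.prob (IT n r (Suc k)) (event_A 4 - event_B (Suc k))
     \<le> measure_pmf.prob (IT n r (Suc k)) ((event_A 4 - event_B k) \<union> (event_A 4 \<inter> event_B k - event_B (Suc k)))"
    by (intro measure_pmf.finite_measure_mono) auto
  also have "\<dots> \<le> measure_pmf.prob (IT n r (Suc k)) (event_A 4 - event_B k)
      + measure_pmf.prob (IT n r (Suc k)) (event_A 4 \<inter> event_B k - event_B (Suc k))"
    by (rule measure_Un_le) auto
  also have "measure_pmf.prob (IT n r (Suc k)) (event_A 4 - event_B k) = measure_pmf.prob (IT n r k) (event_A 4 - event_B k)"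
    using step.hyps event_A_take[of k] event_B_take[of k k] by (intro prob_IT_take) auto
  also have "\<dots> \<le> real (k - 4) * \<delta> * P4" using step.IH kK unfolding \<delta>_def D_def P4_def by simp
  also have "measure_pmf.prob (IT n r (Suc k)) (event_A 4 \<inter> event_B k - event_B (Suc k))
     \<le> real (beta n r) / real (D - k) * measure_pmf.prob (IT n r k) (event_A 4 \<inter> event_B k)"
    unfolding D_def by (rule one_step) (use step.hyps kK KD r1 in auto)
  also have "\<dots> \<le> \<delta> * P4"
  proof (rule mult_mono)
    show "real (beta n r) / real (D - k) \<le> \<delta>" unfolding \<delta>_def
      using kK KD unfolding D_def by (intro divide_left_mono) auto
    have "measure_pmf.prob (IT n r k) (event_A 4 \<inter> event_B k) \<le> measure_pmf.prob (IT n r k) (event_A 4)"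
      by (intro measure_pmf.finite_measure_mono) auto
    also have "\<dots> = P4" unfolding P4_def using step.hyps event_A_take by (intro prob_IT_take) auto
    finally show "measure_pmf.prob (IT n r k) (event_A 4 \<inter> event_B k) \<le> P4" .
  qed (auto simp: \<delta>_def)
  finally have "measure_pmf.prob (IT n r (Suc k)) (event_A 4 - event_B (Suc k)) \<le> real (k - 4) * \<delta> * P4 + \<delta> * P4" by simp
  also have "\<dots> = real (Suc k - 4) * \<delta> * P4" using step.hyps by (simp add: algebra_simps of_nat_diff)
  finally show ?case unfolding \<delta>_def D_def P4_def .
qed


definition Est :: "nat \<Rightarrow> nat \<Rightarrow> nat set" where
  "Est r j = insert 1 {2 + j*(r-1) ..< 2 + (Suc j)*(r-1)}"

lemma Est_disj: "j < l \<Longrightarrow> {2 + j*m ..< 2 + (Suc j)*m} \<inter> {2 + l*m ..< 2 + (Suc l)*m} = {}"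
proof -
  assume "j < l"
  then have "Suc j * m \<le> l * m" by (intro mult_le_mono1) simp
  then show ?thesis by auto
qed

lemma Est_inter: "j \<noteq> l \<Longrightarrow> Est r j \<inter> Est r l = {1}"
proof -
  assume "j \<noteq> l"
  then have "{2 + j*(r-1) ..< 2 + (Suc j)*(r-1)} \<inter> {2 + l*(r-1) ..< 2 + (Suc l)*(r-1)} = {}"
    using Est_disj[of j l "r-1"] Est_disj[of l j "r-1"] by (cases "j < l") (auto simp: Int_commute)
  moreover have "Est r j \<inter> Est r l = insert 1 ({2 + j*(r-1) ..< 2 + (Suc j)*(r-1)} \<inter> {2 + l*(r-1) ..< 2 + (Suc l)*(r-1)})"
    unfolding Est_def by auto
  ultimately show ?thesis by (simp only:)
qed

lemma Est_adm:
  assumes r2: "2 \<le> r" and n: "4*(r-1)+1 \<le> n" and k4: "k < 4"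
  shows "Est r k \<in> admissible n r (map (Est r) [0..<k])"
proof -
  have "Suc k * (r-1) \<le> 4 * (r-1)" using k4 by (intro mult_le_mono1) simp
  then have sub: "Est r k \<subseteq> {1..n}"
  proof -
    assume h: "Suc k * (r-1) \<le> 4 * (r-1)"
    { fix x assume "x \<in> {2 + k*(r-1) ..< 2 + (Suc k)*(r-1)}"
      then have "x < 2 + Suc k * (r-1)" by simp
      with h n have "x \<le> n" by linarith }
    then show ?thesis using n unfolding Est_def by auto
  qed
  have "1 \<notin> {2 + k*(r-1) ..< 2 + (Suc k)*(r-1)}" by auto
  then have card: "card (Est r k) = r" using r2 unfolding Est_def by simp
  have notin: "Est r k \<notin> set (map (Est r) [0..<k])"
  proof
    assume "Est r k \<in> set (map (Est r) [0..<k])"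
    then obtain j where j: "j < k" "Est r j = Est r k" by auto
    then have "Est r k \<inter> Est r k = {1}" using Est_inter[of j k r] by auto
    moreover have "2 + k*(r-1) \<in> Est r k" using r2 unfolding Est_def by auto
    ultimately show False by auto
  qed
  have "\<forall>f\<in>set (map (Est r) [0..<k]). Est r k \<inter> f \<noteq> {}" unfolding Est_def by auto
  with sub card notin show ?thesis unfolding admissible_def by auto
qed

lemma Est_support:
  assumes r2: "2 \<le> r" and n: "4*(r-1)+1 \<le> n"
  shows "k \<le> 4 \<Longrightarrow> map (Est r) [0..<k] \<in> set_pmf (IT n r k)"
proof (induction k)
  case 0 then show ?case by (simp add: IT_0)
next
  case (Suc k)
  then have "map (Est r) [0..<k] @ [Est r k] \<in> set_pmf (IT n r (Suc k))"
    using Est_adm[OF r2 n, of k] by (intro IT_extend) auto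
  then show ?case by simp
qed

lemma P4_pos:
  assumes r2: "2 \<le> r" and n: "4*(r-1)+1 \<le> n"
  shows "measure_pmf.prob (IT n r 4) (event_A 4) > 0"
proof (rule measure_pmf_posI)
  show "map (Est r) [0..<4] \<in> set_pmf (IT n r 4)" by (rule Est_support[OF r2 n]) simp
  have "is_star (map (Est r) [0..<4])"
    unfolding is_star_def using Est_inter by (intro exI[of _ 1]) auto
  then show "map (Est r) [0..<4] \<in> event_A 4" unfolding event_A_def by simp
qed


lemma binom_ge_m: "1 \<le> k \<Longrightarrow> k < m \<Longrightarrow> m \<le> m choose k"
proof (induction m arbitrary: k)
  case 0 then show ?case by simp
next
  case (Suc m)
  obtain j where j: "k = Suc j" using Suc.prems by (cases k) auto
  show ?case
  proof (cases "j = 0")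
    case True then show ?thesis using j by simp
  next
    case False
    then have "m \<le> m choose j" using Suc.IH[of j] Suc.prems j by simp
    moreover have "0 < m choose Suc j" using Suc.prems j by simp
    moreover have "Suc m choose k = (m choose j) + (m choose Suc j)" using j by simp
    ultimately show ?thesis by linarith
  qed
qed

lemma binom_step: "k < n \<Longrightarrow> (n - k) * (n choose k) = Suc k * (n choose Suc k)"
  using binomial_absorb_comp[of n k] binomial_absorption[of k n] by simp

lemma binom_iter: "j + i \<le> r \<Longrightarrow> r \<le> n \<Longrightarrow> (n choose j) * (n - r)^i \<le> (n choose (j + i)) * r^i"
proof (induction i)
  case 0 then show ?case by simp
next
  case (Suc i)
  have IH: "(n choose j) * (n - r)^i \<le> (n choose (j + i)) * r^i" using Suc by simp
  have "(n choose j) * (n - r)^Suc i = ((n choose j) * (n - r)^i) * (n - r)" by simp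
  also have "\<dots> \<le> ((n choose (j + i)) * r^i) * (n - (j + i))"
    by (rule mult_mono) (use IH Suc.prems in auto)
  also have "\<dots> = r^i * ((n - (j + i)) * (n choose (j + i)))" by simp
  also have "(n - (j + i)) * (n choose (j + i)) = Suc (j + i) * (n choose Suc (j + i))"
    using Suc.prems by (intro binom_step) auto
  also have "r^i * (Suc (j + i) * (n choose Suc (j + i))) \<le> r^i * (r * (n choose Suc (j + i)))"
    using Suc.prems by (intro mult_le_mono2 mult_le_mono1) auto
  finally show ?case by (simp add: mult_ac)
qed

lemma beta_bound: "r \<le> n \<Longrightarrow> beta n r * (n - r)^4 \<le> (n choose r) * r^8"
proof (cases "4 \<le> r")
  case True
  assume rn: "r \<le> n"
  have "beta n r * (n - r)^4 = (r-1)^4 * ((n choose (r - 4)) * (n - r)^4)"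
    using True by (simp add: beta_def)
  also have "\<dots> \<le> r^4 * ((n choose (r - 4 + 4)) * r^4)"
    by (intro mult_mono power_mono binom_iter) (use True rn in auto)
  also have "\<dots> = (n choose r) * r^8" using True by (simp add: power_add[symmetric] mult_ac)
  finally show ?thesis .
qed (simp add: beta_def)

lemma fixed_n:
  assumes r2: "2 \<le> r" and n: "4*(r-1)+1 \<le> n" and KD: "6*r \<le> (n - 1) choose (r - 1)"
  shows "cond_prob (rip n r) (event_B (3 * r)) (event_A 4)
           \<ge> 1 - real (3 * r) * (real (beta n r) / real (((n - 1) choose (r - 1)) - 3 * r))"
    and "cond_prob (rip n r) (event_B (3 * r)) (event_A 4) \<le> 1"
proof -
  define K where "K = 3 * r"
  define D where "D = (n - 1) choose (r - 1)"
  define \<delta> where "\<delta> = real (beta n r) / real (D - K)"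
  define M where "M = Suc (n choose r)"
  have KD': "K < D" using KD r2 unfolding K_def D_def by simp
  have "n choose r = ((n - 1) choose (r - 1)) + ((n - 1) choose r)"
    using n r2 binomial_Suc_Suc[of "n-1" "r-1"] by simp
  then have KM: "K \<le> M" using KD' unfolding M_def D_def by simp
  have K4: "4 \<le> K" using r2 unfolding K_def by simp
  define P4 where "P4 = measure_pmf.prob (IT n r 4) (event_A 4)"
  have P4pos: "P4 > 0" unfolding P4_def by (rule P4_pos[OF r2 n])
  have pA: "measure_pmf.prob (rip n r) (event_A 4) = P4"
    unfolding rip_IT P4_def M_def[symmetric] using KM K4 event_A_take by (intro prob_IT_take) auto
  have "measure_pmf.prob (rip n r) (event_A 4 - event_B K) = measure_pmf.prob (IT n r K) (event_A 4 - event_B K)"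
    unfolding rip_IT M_def[symmetric] using KM K4 event_A_take[of K] event_B_take[of K K] by (intro prob_IT_take) auto
  also have "\<dots> \<le> real (K - 4) * \<delta> * P4"
    unfolding \<delta>_def P4_def D_def by (rule accum) (use K4 KD' r2 in \<open>auto simp: D_def\<close>)
  also have "\<dots> \<le> real K * \<delta> * P4"
    using P4pos by (intro mult_right_mono) (auto simp: \<delta>_def)
  finally have bad: "measure_pmf.prob (rip n r) (event_A 4 - event_B K) \<le> real K * \<delta> * P4" .
  have split: "measure_pmf.prob (rip n r) (event_B K \<inter> event_A 4)
      = P4 - measure_pmf.prob (rip n r) (event_A 4 - event_B K)"
    using measure_pmf.finite_measure_Diff'[of "event_A 4" "rip n r" "event_B K"] pA
    by (simp add: Int_commute)
  have "cond_prob (rip n r) (event_B K) (event_A 4) = (P4 - measure_pmf.prob (rip n r) (event_A 4 - event_B K)) / P4"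
    unfolding cond_prob_def split pA ..
  also have "\<dots> = 1 - measure_pmf.prob (rip n r) (event_A 4 - event_B K) / P4"
    using P4pos by (simp add: field_simps)
  finally have eq: "cond_prob (rip n r) (event_B K) (event_A 4) = 1 - measure_pmf.prob (rip n r) (event_A 4 - event_B K) / P4" .
  have "measure_pmf.prob (rip n r) (event_A 4 - event_B K) / P4 \<le> real K * \<delta>"
    using bad P4pos by (simp add: divide_le_eq)
  then show "cond_prob (rip n r) (event_B (3 * r)) (event_A 4)
           \<ge> 1 - real (3 * r) * (real (beta n r) / real (((n - 1) choose (r - 1)) - 3 * r))"
    using eq unfolding K_def \<delta>_def D_def by simp
  have "0 \<le> measure_pmf.prob (rip n r) (event_A 4 - event_B K) / P4" using P4pos by simp
  then show "cond_prob (rip n r) (event_B (3 * r)) (event_A 4) \<le> 1" using eq unfolding K_def by simp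
qed


lemma final_arith:
  assumes r2: "2 \<le> r" and rn: "2*r \<le> n" and KD: "6*r \<le> (n - 1) choose (r - 1)"
  shows "real (3 * r) * (real (beta n r) / real (((n - 1) choose (r - 1)) - 3 * r)) \<le> 96 * real r ^ 8 / real n ^ 3"
proof -
  define D where "D = (n - 1) choose (r - 1)"
  define b where "b = real (beta n r)"
  define C where "C = real (n choose r)"
  have Cpos: "C > 0" unfolding C_def using rn by simp
  have npos: "real n > 0" using rn r2 by simp
  have hb: "b * (real n - real r)^4 \<le> C * real r ^ 8"
  proof -
    have "real (beta n r * (n - r)^4) \<le> real ((n choose r) * r^8)"
      using beta_bound[of r n] rn by (intro of_nat_mono) simp
    then show ?thesis unfolding b_def C_def using rn by (simp add: of_nat_diff)
  qed
  have hD: "real D * real n = C * real r"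
  proof -
    have "r * (n choose r) = n * ((n - 1) choose (r - 1))" using r2 by (intro times_binomial_minus1_eq) simp
    then have "real r * C = real n * real D" unfolding C_def D_def by (metis of_nat_mult)
    then show ?thesis by (simp add: mult_ac)
  qed
  have Dpos: "real D > 0" using KD r2 unfolding D_def by (metis mult_pos_pos of_nat_0_less_iff order_less_le_trans zero_less_numeral le_trans numeral_le_iff) 
  have hden: "real (D - 3 * r) \<ge> real D / 2" using KD unfolding D_def by (simp add: of_nat_diff)
  have b0: "b \<ge> 0" unfolding b_def by simp
  have "real (3 * r) * (b / real (D - 3 * r)) \<le> real (3 * r) * (b / (real D / 2))"
    using hden Dpos b0 by (intro mult_left_mono divide_left_mono) auto
  also have "\<dots> = 6 * b * real n * real r / (real D * real n)" using npos Dpos by (simp add: field_simps)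
  also have "\<dots> = 6 * b * real n / C" unfolding hD using r2 Cpos by (simp add: field_simps)
  also have "\<dots> \<le> 96 * real r ^ 8 / real n ^ 3"
  proof -
    have nr: "real n / 2 \<le> real n - real r" using rn by simp
    have "(real n / 2)^4 \<le> (real n - real r)^4" using nr npos by (intro power_mono) auto
    then have "b * (real n / 2)^4 \<le> b * (real n - real r)^4" using b0 by (intro mult_left_mono) auto
    with hb have "b * real n ^ 4 \<le> 16 * C * real r ^ 8" by (simp add: power_divide)
    then have "6 * b * real n * real n ^ 3 \<le> 96 * real r ^ 8 * C"
      by (simp add: power_Suc field_simps power4_eq_xxxx power3_eq_cube)
    then show ?thesis using Cpos npos by (simp add: divide_le_eq le_divide_eq field_simps)
  qed
  finally show ?thesis unfolding b_def D_def .
qed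


theorem lemma5:
  fixes r :: "nat \<Rightarrow> nat"
  assumes "\<forall>n. 2 \<le> r n"
    and "(\<lambda>n. real (r n)) \<in> o(\<lambda>n. real n powr (3/8))"
  shows "(\<lambda>n. cond_prob (rip n (r n)) (event_B (3 * r n)) (event_A 4)) \<longlonglongrightarrow> 1"
proof -
  have h8: "(\<lambda>n. real (r n) ^ 8) \<in> o(\<lambda>n. (real n powr (3/8)) ^ 8)"
    by (rule landau_o.small_power[OF assms(2)]) simp
  have t0: "(\<lambda>n. real (r n) ^ 8 / (real n powr (3/8)) ^ 8) \<longlonglongrightarrow> 0"
    by (rule smalloD_tendsto[OF h8])
  have ev_pos: "eventually (\<lambda>n::nat. n > 0) sequentially" by (rule eventually_gt_at_top)
  have "eventually (\<lambda>n. real (r n) ^ 8 / (real n powr (3/8)) ^ 8 = real (r n) ^ 8 / real n ^ 3) sequentially"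
    using ev_pos
  proof eventually_elim
    case (elim n)
    then have "(real n powr (3/8)) ^ 8 = real n powr (real 8 * (3/8))" by (intro powr_power) simp
    also have "\<dots> = real n powr (real 3)" by simp
    also have "\<dots> = real n ^ 3" using elim by (intro powr_realpow) simp
    finally show ?case by simp
  qed
  then have t1: "(\<lambda>n. real (r n) ^ 8 / real n ^ 3) \<longlonglongrightarrow> 0"
    using t0 by (rule Lim_transform_eventually[rotated])
  have ev_small: "eventually (\<lambda>n. real (r n) ^ 8 / real n ^ 3 < 1 / 10^8) sequentially"
    using t1 by (rule order_tendstoD) simp
  define f where "f = (\<lambda>n. cond_prob (rip n (r n)) (event_B (3 * r n)) (event_A 4))"
  define g where "g = (\<lambda>n. 1 - 96 * (real (r n) ^ 8 / real n ^ 3))"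
  have g1: "g \<longlonglongrightarrow> 1" unfolding g_def using tendsto_diff[OF tendsto_const tendsto_mult[OF tendsto_const t1], of 1 96] by simp
  have upper: "eventually (\<lambda>n. f n \<le> 1) sequentially" and lower: "eventually (\<lambda>n. g n \<le> f n) sequentially"
  proof -
    have "eventually (\<lambda>n. g n \<le> f n \<and> f n \<le> 1) sequentially"
      using ev_small ev_pos
    proof eventually_elim
      case (elim n)
      define q where "q = r n"
      have q2: "2 \<le> q" using assms(1) unfolding q_def by simp
      have np: "real n > 0" using elim by simp
      have "real q ^ 8 * 10^8 < real n ^ 3" using elim np unfolding q_def by (simp add: field_simps)
      also have "\<dots> \<le> real n ^ 8" using elim by (intro power_increasing) auto
      finally have "(real q * 10) ^ 8 < real n ^ 8" by (simp add: power_mult_distrib)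
      then have "real q * 10 < real n" by (rule power_less_imp_less_base) simp
      then have q10: "10 * q < n" by linarith
      have c1: "4*(q-1)+1 \<le> n" and c2: "2*q \<le> n" using q10 q2 by auto
      have "n - 1 \<le> (n - 1) choose (q - 1)" using q2 q10 by (intro binom_ge_m) auto
      then have c3: "6*q \<le> (n - 1) choose (q - 1)" using q10 by linarith
      have "f n \<ge> 1 - real (3 * q) * (real (beta n q) / real (((n - 1) choose (q - 1)) - 3 * q))"
        unfolding f_def q_def[symmetric] by (rule fixed_n(1)[OF q2 c1 c3])
      moreover have "real (3 * q) * (real (beta n q) / real (((n - 1) choose (q - 1)) - 3 * q)) \<le> 96 * real q ^ 8 / real n ^ 3"
        by (rule final_arith[OF q2 c2 c3])
      moreover have "f n \<le> 1" unfolding f_def q_def[symmetric] by (rule fixed_n(2)[OF q2 c1 c3])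
      ultimately show ?case unfolding g_def q_def[symmetric] by simp
    qed
    then show "eventually (\<lambda>n. f n \<le> 1) sequentially" "eventually (\<lambda>n. g n \<le> f n) sequentially"
      by (auto elim: eventually_mono)
  qed
  have "f \<longlonglongrightarrow> 1" by (rule tendsto_sandwich[OF lower upper g1 tendsto_const])
  then show ?thesis unfolding f_def .
qed

end
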